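(* For any integers $k\ge4$ and $L\ge1$ there exists $f_{k,L}\in\mathcal{NN}_{2,1}(3k2^k+3,L)$ such that $f_{k,L}([-1,1]^2)\subseteq[-1,1]$ and \[ |f_{k,L}(x,y)-xy|\le 2^{-2kL-1}\qquad\text{for all }x,y\in[-1,1]. \]
   Context: $\mathcal{NN}_{d,k}(W,L)$: set of maps $g:\mathbb{R}^d\to\mathbb{R}^k$ given by $g_0(x)=x$, $g_{\ell+1}(x)=\sigma(A_\ell g_\ell(x)+b_\ell)$ ($\ell=0,\dots,L-1$), $g(x)=A_Lg_L(x)+b_L$, with $A_\ell\in\mathbb{R}^{N_{\ell+1}\times N_\ell}$, $b_\ell\in\mathbb{R}^{N_{\ell+1}}$, $N_0=d$, $N_{L+1}=k$, $\max\{N_1,\dots,N_L\}\le W$, $\sigma(t)=\max\{t,0\}$ componentwise. *)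

theory Defs
  imports Complex_Main
begin

text \<open>Vectors in R^n are represented as functions nat => real, of which
only the entries with index < n matter. A network of depth L is given by widths N 0, ..., N (L+1),
weight matrices A l (of size N (l+1) x N l) and bias vectors b l, for l = 0..L.\<close>

fun nn_hidden :: "(nat \<Rightarrow> nat) \<Rightarrow> (nat \<Rightarrow> nat \<Rightarrow> nat \<Rightarrow> real) \<Rightarrow> (nat \<Rightarrow> nat \<Rightarrow> real)
                  \<Rightarrow> nat \<Rightarrow> (nat \<Rightarrow> real) \<Rightarrow> (nat \<Rightarrow> real)" where
  "nn_hidden N A b 0 x = (\<lambda>i. if i < N 0 then x i else 0)"
| "nn_hidden N A b (Suc l) x =
     (\<lambda>i. if i < N (Suc l)
          then max 0 ((\<Sum>j<N l. A l i j * nn_hidden N A b l x j) + b l i) else 0)"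

definition nn_eval :: "(nat \<Rightarrow> nat) \<Rightarrow> (nat \<Rightarrow> nat \<Rightarrow> nat \<Rightarrow> real) \<Rightarrow> (nat \<Rightarrow> nat \<Rightarrow> real)
                  \<Rightarrow> nat \<Rightarrow> (nat \<Rightarrow> real) \<Rightarrow> (nat \<Rightarrow> real)" where
  "nn_eval N A b L x =
     (\<lambda>i. if i < N (Suc L)
          then (\<Sum>j<N L. A L i j * nn_hidden N A b L x j) + b L i else 0)"

definition NN :: "nat \<Rightarrow> nat \<Rightarrow> nat \<Rightarrow> nat \<Rightarrow> ((nat \<Rightarrow> real) \<Rightarrow> (nat \<Rightarrow> real)) set" where
  "NN d k W L = {g. \<exists>N A b. N 0 = d \<and> N (Suc L) = k \<and> (\<forall>l\<in>{1..L}. N l \<le> W) \<and>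
                         g = nn_eval N A b L}"

definition vec2 :: "real \<Rightarrow> real \<Rightarrow> nat \<Rightarrow> real" where
  "vec2 x y = (\<lambda>i. if i = 0 then x else if i = 1 then y else 0)"

end

theory Submission
  imports Defs
begin


definition R :: "nat \<Rightarrow> nat \<Rightarrow> real \<Rightarrow> real" where "R n i u = max 0 (u - real i / real n)"
definition zc :: "nat \<Rightarrow> nat \<Rightarrow> real" where "zc n i = (if i = 0 then real n else 2 * real n * (-1)^i)"
definition pc :: "nat \<Rightarrow> nat \<Rightarrow> real" where "pc n i = (if i = 0 then 1 - 1/real n else -2/real n)"
definition Zf :: "nat \<Rightarrow> real \<Rightarrow> real" where "Zf n u = (\<Sum>i<n. zc n i * R n i u)"
definition Pf :: "nat \<Rightarrow> real \<Rightarrow> real" where "Pf n u = (\<Sum>i<n. pc n i * R n i u)"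
definition q :: "real \<Rightarrow> real" where "q u = u - u^2"

lemma sum_R:
  assumes "n > 0" "j < n" "real j / real n \<le> u" "u \<le> (real j + 1) / real n"
  shows "(\<Sum>i<n. c i * R n i u) = (\<Sum>i<Suc j. c i * (u - real i / real n))"
proof -
  have "(\<Sum>i<n. c i * R n i u) = (\<Sum>i<n. if i < Suc j then c i * (u - real i / real n) else 0)"
  proof (rule sum.cong[OF refl])
    fix i assume "i \<in> {..<n}"
    show "c i * R n i u = (if i < Suc j then c i * (u - real i / real n) else 0)"
    proof (cases "i < Suc j")
      case True
      then have "real i / real n \<le> real j / real n" using assms(1)
        by (simp add: divide_right_mono)
      then show ?thesis using True assms(3) by (simp add: R_def)
    next
      case False
      then have "real j + 1 \<le> real i" by simp
      then have "(real j + 1) / real n \<le> real i / real n" using assms(1)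
        by (simp add: divide_right_mono)
      then show ?thesis using False assms(4) by (simp add: R_def)
    qed
  qed
  also have "\<dots> = (\<Sum>i\<in>{i\<in>{..<n}. i < Suc j}. c i * (u - real i / real n))"
    by (rule sum.inter_filter[symmetric]) simp
  also have "{i\<in>{..<n}. i < Suc j} = {..<Suc j}" using assms(2) by auto
  finally show ?thesis by simp
qed

lemma sum_pc: "n > 0 \<Longrightarrow> (\<Sum>i<Suc j. pc n i * (u - real i / real n))
   = u - u / n - 2 * j * u / n + real j * (real j + 1) / (real n)^2"
proof (induction j)
  case 0 then show ?case by (simp add: pc_def algebra_simps)
next
  case (Suc j)
  have "(\<Sum>i<Suc (Suc j). pc n i * (u - real i / real n)) = (\<Sum>i<Suc j. pc n i * (u - real i / real n)) + pc n (Suc j) * (u - real (Suc j) / real n)"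
    by (rule sum.lessThan_Suc)
  also have "\<dots> = u - u / n - 2 * j * u / n + real j * (real j + 1) / (real n)^2 + pc n (Suc j) * (u - real (Suc j) / real n)"
    using Suc by simp
  also have "\<dots> = u - u / n - 2 * real (Suc j) * u / n + real (Suc j) * (real (Suc j) + 1) / (real n)^2"
    using Suc.prems by (simp add: pc_def field_simps power2_eq_square)
  finally show ?case .
qed

lemma sum_zc: "n > 0 \<Longrightarrow> (\<Sum>i<Suc j. zc n i * (u - real i / real n))
   = (if even j then real n * u - real j else real j + 1 - real n * u)"
proof (induction j)
  case 0 then show ?case by (simp add: zc_def algebra_simps)
next
  case (Suc j)
  have "(\<Sum>i<Suc (Suc j). zc n i * (u - real i / real n)) = (\<Sum>i<Suc j. zc n i * (u - real i / real n)) + zc n (Suc j) * (u - real (Suc j) / real n)"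
    by (rule sum.lessThan_Suc)
  also have "\<dots> = (if even j then real n * u - real j else real j + 1 - real n * u) + zc n (Suc j) * (u - real (Suc j) / real n)"
    using Suc by simp
  also have "\<dots> = (if even (Suc j) then real n * u - real (Suc j) else real (Suc j) + 1 - real n * u)"
    using Suc.prems by (auto simp add: zc_def field_simps)
  finally show ?case .
qed

lemma ex_piece:
  assumes "n > 0" "0 \<le> u" "u \<le> 1"
  shows "\<exists>j<n. real j / real n \<le> u \<and> u \<le> (real j + 1) / real n"
proof (cases "u = 1")
  case True
  then show ?thesis using assms by (intro exI[of _ "n - 1"]) (auto simp: of_nat_diff)
next
  case False
  define j where "j = nat \<lfloor>real n * u\<rfloor>"
  have f0: "0 \<le> \<lfloor>real n * u\<rfloor>" using assms by simp
  have rj: "real j = of_int \<lfloor>real n * u\<rfloor>" using f0 by (simp add: j_def)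
  have a: "real j \<le> real n * u" using rj by linarith
  have b: "real n * u < real j + 1" using rj by linarith
  have "real n * u < real n" using False assms by simp
  then have "real j < real n" using a by linarith
  then have "j < n" by simp
  moreover have "real j / real n \<le> u" using a assms(1) by (simp add: field_simps)
  moreover have "u \<le> (real j + 1) / real n" using b assms(1) by (simp add: field_simps)
  ultimately show ?thesis by blast
qed

lemma one_step:
  assumes "n > 0" "0 \<le> u" "u \<le> 1"
  shows "0 \<le> Zf n u \<and> Zf n u \<le> 1 \<and> q u = Pf n u + q (Zf n u) / (real n)^2"
proof -
  obtain j where j: "j < n" "real j / real n \<le> u" "u \<le> (real j + 1) / real n"
    using ex_piece[OF assms] by blast
  define w where "w = real n * u - real j"
  have w0: "0 \<le> w" using j(2) assms(1) by (simp add: w_def field_simps)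
  have w1: "w \<le> 1" using j(3) assms(1) by (simp add: w_def field_simps)
  have Z: "Zf n u = (if even j then w else 1 - w)"
    unfolding Zf_def using sum_R[OF assms(1) j] sum_zc[OF assms(1)] by (simp add: w_def)
  have P: "Pf n u = u - u / n - 2 * j * u / n + real j * (real j + 1) / (real n)^2"
    unfolding Pf_def using sum_R[OF assms(1) j] sum_pc[OF assms(1)] by simp
  have qZ: "q (Zf n u) = w - w^2" using Z by (simp add: q_def power2_eq_square algebra_simps)
  have uw: "u = (real j + w) / real n" using assms(1) by (simp add: w_def field_simps)
  have "q u - Pf n u = (w - w^2) / (real n)^2"
    unfolding P q_def using assms(1) by (simp add: uw field_simps power2_eq_square)
  then show ?thesis using Z w0 w1 qZ by auto
qed




fun U :: "nat \<Rightarrow> nat \<Rightarrow> real \<Rightarrow> real" where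
  "U n 0 u = u" | "U n (Suc m) u = Zf n (U n m u)"
fun Acc :: "nat \<Rightarrow> nat \<Rightarrow> real \<Rightarrow> real" where
  "Acc n 0 u = 0" | "Acc n (Suc m) u = Acc n m u + Pf n (U n m u) / (real n)^(2*m)"

lemma q_bounds: "0 \<le> v \<Longrightarrow> v \<le> 1 \<Longrightarrow> 0 \<le> q v \<and> q v \<le> 1/4"
proof -
  assume a: "0 \<le> v" "v \<le> 1"
  have "0 \<le> v * (1 - v)" using a by simp
  moreover have "(v - 1/2)^2 \<ge> 0" by simp
  ultimately show ?thesis by (simp add: q_def power2_eq_square algebra_simps)
qed

lemma iter:
  assumes "n > 0" "0 \<le> u" "u \<le> 1"
  shows "0 \<le> U n m u \<and> U n m u \<le> 1 \<and> Acc n m u = q u - q (U n m u) / (real n)^(2*m)"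
proof (induction m)
  case 0 then show ?case using assms by simp
next
  case (Suc m)
  have os: "0 \<le> Zf n (U n m u) \<and> Zf n (U n m u) \<le> 1 \<and> q (U n m u) = Pf n (U n m u) + q (Zf n (U n m u)) / (real n)^2"
    using one_step[OF assms(1), of "U n m u"] Suc.IH by blast
  have "Acc n (Suc m) u = q u - (q (U n m u) - Pf n (U n m u)) / (real n)^(2*m)"
    using Suc by (simp add: diff_divide_distrib)
  also have "\<dots> = q u - q (U n (Suc m) u) / (real n)^(2 * Suc m)"
  proof -
    have e: "q (U n m u) - Pf n (U n m u) = q (U n (Suc m) u) / (real n)^2" using os by simp
    have p: "(real n)^(2 * Suc m) = (real n)^2 * (real n)^(2*m)" by (simp add: power_add[symmetric])
    show ?thesis unfolding e p by (simp add: divide_divide_eq_left)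
  qed
  finally show ?case using os by simp
qed

lemma Acc_ge: assumes "n > 0" "0 \<le> u" "u \<le> 1" shows "Acc n m u \<ge> -1"
proof -
  have i: "0 \<le> U n m u" "U n m u \<le> 1" "Acc n m u = q u - q (U n m u) / (real n)^(2*m)"
    using iter[OF assms] by auto
  have h1: "q (U n m u) \<le> 1/4" and h0: "0 \<le> q u" and hq0: "0 \<le> q (U n m u)"
    using q_bounds i(1,2) q_bounds assms(2,3) by auto
  have hX: "(real n)^(2*m) \<ge> 1" using assms(1) by (simp add: one_le_power)
  have "q (U n m u) / (real n)^(2*m) \<le> q (U n m u) / 1"
    by (rule divide_left_mono) (use hX hq0 assms(1) in auto)
  then show ?thesis using i(3) h0 h1 by simp
qed

lemma sum_add_split: "(\<Sum>j<a+b. f j) = (\<Sum>j<a. f j) + (\<Sum>j<b. f (a+j::nat)) "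
  by (induction b) (simp_all add: add.assoc)

lemma sum_split: "(\<Sum>j<2*n+2. (f::nat\<Rightarrow>'a::comm_monoid_add) j) = (\<Sum>j<n. f j) + (\<Sum>j<n. f (n+j)) + f (2*n) + f (2*n+1)"
proof -
  have "(\<Sum>j<n+n. f j) = (\<Sum>j<n. f j) + (\<Sum>j<n. f (n+j))"
    using sum_add_split[of f n n] by simp
  then show ?thesis by (simp add: mult_2 add.assoc)
qed




definition NW :: "nat \<Rightarrow> nat \<Rightarrow> nat \<Rightarrow> nat" where
  "NW n L l = (if l = 0 then 2 else if l \<le> L then 2*n+2 else 1)"

definition AW :: "nat \<Rightarrow> nat \<Rightarrow> real \<Rightarrow> nat \<Rightarrow> nat \<Rightarrow> nat \<Rightarrow> real" where
  "AW n L c l i j =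
    (if l = 0 then
       (if i < n then (if j = 0 \<or> j = 1 then 1/4 else 0)
        else if i < 2*n then (if j = 0 then 1/4 else if j = 1 then -1/4 else 0) else 0)
     else if l < L then
       (if i < n then (if j < n then zc n j else 0)
        else if i < 2*n then (if n \<le> j \<and> j < 2*n then zc n (j-n) else 0)
        else if i = 2*n then (if j < n then pc n j / (real n)^(2*(l-1)) else if j = 2*n then 1 else 0)
        else if i = 2*n+1 then (if n \<le> j \<and> j < 2*n then pc n (j-n) / (real n)^(2*(l-1))
                                else if j = 2*n+1 then 1 else 0)
        else 0)
     else c * (-4) * (if j < n then pc n j / (real n)^(2*(l-1))
                      else if j < 2*n then - pc n (j-n) / (real n)^(2*(l-1))
                      else if j = 2*n then 1 else if j = 2*n+1 then -1 else 0))"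

definition bW :: "nat \<Rightarrow> nat \<Rightarrow> nat \<Rightarrow> nat \<Rightarrow> real" where
  "bW n L l i =
    (if l = 0 then (if i < n then 1/2 - real i / real n else if i < 2*n then 1/2 - real (i-n) / real n else 1)
     else if l < L then (if i < n then - real i / real n else if i < 2*n then - real (i-n) / real n else 0)
     else 0)"

definition H :: "nat \<Rightarrow> nat \<Rightarrow> real \<Rightarrow> real \<Rightarrow> nat \<Rightarrow> real" where
  "H n m t r i = (if i < n then R n i (U n m t) else if i < 2*n then R n (i-n) (U n m r)
     else if i = 2*n then Acc n m t + 1 else if i = 2*n+1 then Acc n m r + 1 else 0)"

lemma hidden:
  assumes n: "n > 0" and x: "-1 \<le> x" "x \<le> 1" and y: "-1 \<le> y" "y \<le> 1"
  shows "Suc m \<le> L \<Longrightarrow> nn_hidden (NW n L) (AW n L c) (bW n L) (Suc m) (vec2 x y)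
         = H n m ((x+y+2)/4) ((x-y+2)/4)"
proof (induction m)
  case 0
  show ?case
  proof (rule ext)
    fix i
    show "nn_hidden (NW n L) (AW n L c) (bW n L) (Suc 0) (vec2 x y) i = H n 0 ((x+y+2)/4) ((x-y+2)/4) i"
      using 0 by (simp add: NW_def AW_def bW_def H_def vec2_def R_def numeral_2_eq_2 algebra_simps)
        (auto intro!: arg_cong[where f="max (0::real)"] simp: field_simps)
  qed
next
  case (Suc m)
  define t where "t = (x+y+2)/4"
  define r where "r = (x-y+2)/4"
  have t01: "0 \<le> t" "t \<le> 1" using x y by (auto simp: t_def)
  have r01: "0 \<le> r" "r \<le> 1" using x y by (auto simp: r_def)
  have IH: "nn_hidden (NW n L) (AW n L c) (bW n L) (Suc m) (vec2 x y) = H n m t r"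
    using Suc by (simp add: t_def r_def)
  have mL: "Suc m < L" using Suc.prems by simp
  show ?case
  proof (rule ext)
    fix i
    show "nn_hidden (NW n L) (AW n L c) (bW n L) (Suc (Suc m)) (vec2 x y) i = H n (Suc m) ((x+y+2)/4) ((x-y+2)/4) i"
    proof -
      have m0: "Suc m \<noteq> 0" "Suc m < L" "Suc m - 1 = m" using mL by auto
      let ?S = "(\<Sum>j<2*n+2. AW n L c (Suc m) i j * H n m t r j)"
      have lhs: "nn_hidden (NW n L) (AW n L c) (bW n L) (Suc (Suc m)) (vec2 x y) i
          = (if i < 2*n+2 then max 0 (?S + bW n L (Suc m) i) else 0)"
        using IH mL by (simp add: NW_def)
      have c1: "i < n \<Longrightarrow> ?S = Zf n (U n m t)"
        unfolding sum_split using m0 by (simp add: AW_def H_def Zf_def cong: sum.cong_simp)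
      have c2: "\<not> i < n \<Longrightarrow> i < 2*n \<Longrightarrow> ?S = Zf n (U n m r)"
        unfolding sum_split using m0 by (simp add: AW_def H_def Zf_def cong: sum.cong_simp)
      have c3: "i = 2*n \<Longrightarrow> ?S = Acc n (Suc m) t + 1"
        unfolding sum_split using m0 by (simp add: AW_def H_def Pf_def sum_divide_distrib cong: sum.cong_simp)
      have c4: "i = 2*n+1 \<Longrightarrow> ?S = Acc n (Suc m) r + 1"
        unfolding sum_split using m0 by (simp add: AW_def H_def Pf_def sum_divide_distrib cong: sum.cong_simp)
      have a1: "Acc n (Suc m) t + 1 \<ge> 0" using Acc_ge[OF n t01] by smt
      have a2: "Acc n (Suc m) r + 1 \<ge> 0" using Acc_ge[OF n r01] by smt
      show ?thesis
        unfolding lhs using c1 c2 c3 c4 a1 a2 m0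
        by (auto simp: H_def bW_def R_def t_def r_def intro!: arg_cong[where f="max (0::real)"]; simp add: field_simps)
    qed
  qed
qed




lemma out_eval:
  assumes n: "n > 0" and x: "-1 \<le> x" "x \<le> 1" and y: "-1 \<le> y" "y \<le> 1" and L: "L = Suc m"
  shows "nn_eval (NW n L) (AW n L c) (bW n L) L (vec2 x y) 0
     = c * (-4) * (Acc n L ((x+y+2)/4) - Acc n L ((x-y+2)/4))"
proof -
  define t where "t = (x+y+2)/4"
  define r where "r = (x-y+2)/4"
  have hid: "nn_hidden (NW n L) (AW n L c) (bW n L) L (vec2 x y) = H n m t r"
    unfolding t_def r_def L by (rule hidden[OF n x y, of m "Suc m" c, OF le_refl])
  have "nn_eval (NW n L) (AW n L c) (bW n L) L (vec2 x y) 0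
      = (\<Sum>j<2*n+2. AW n L c L 0 j * H n m t r j)"
  proof -
    have "NW n L (Suc L) = 1" "NW n L L = 2*n+2" "bW n L L 0 = 0" using L by (auto simp: NW_def bW_def)
    then show ?thesis unfolding nn_eval_def hid by simp
  qed
  also have "\<dots> = c * (-4) * (Acc n L t - Acc n L r)"
  proof -
    have Ln: "L \<noteq> 0" "\<not> L < L" "L - 1 = m" using L by auto
    have s1: "(\<Sum>j<n. AW n L c L 0 j * H n m t r j) = c*(-4) * (Pf n (U n m t) / (real n)^(2*m))"
    proof -
      have "(\<Sum>j<n. AW n L c L 0 j * H n m t r j) = (\<Sum>j<n. c*(-4) * (pc n j * R n j (U n m t) / (real n)^(2*m)))"
        by (rule sum.cong) (use Ln in \<open>auto simp: AW_def H_def\<close>)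
      then show ?thesis by (simp add: Pf_def sum_distrib_left sum_divide_distrib)
    qed
    have s2: "(\<Sum>j<n. AW n L c L 0 (n+j) * H n m t r (n+j)) = c*(-4) * (- Pf n (U n m r) / (real n)^(2*m))"
    proof -
      have "(\<Sum>j<n. AW n L c L 0 (n+j) * H n m t r (n+j)) = (\<Sum>j<n. c*(-4) * (- (pc n j * R n j (U n m r) / (real n)^(2*m))))"
        by (rule sum.cong) (use Ln in \<open>auto simp: AW_def H_def\<close>)
      then show ?thesis by (simp add: Pf_def sum_distrib_left sum_divide_distrib sum_negf)
    qed
    have s3: "AW n L c L 0 (2*n) * H n m t r (2*n) = c*(-4) * (Acc n m t + 1)"
      using Ln by (simp add: AW_def H_def)
    have f4: "\<not> 2*n+1 < n" "\<not> 2*n+1 < 2*n" "2*n+1 \<noteq> 2*n" by auto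
    have s4: "AW n L c L 0 (2*n+1) * H n m t r (2*n+1) = c*(-4) * (-(Acc n m r + 1))"
      unfolding AW_def H_def using Ln f4 by (simp only: if_False if_True refl simp_thms)
    have "Acc n L t = Acc n m t + Pf n (U n m t) / (real n)^(2*m)" "Acc n L r = Acc n m r + Pf n (U n m r) / (real n)^(2*m)"
      using L by simp_all
    then show ?thesis unfolding sum_split s1 s2 s3 s4 by (simp add: algebra_simps)
  qed
  finally show ?thesis by (simp add: t_def r_def)
qed




lemma final_bounds:
  fixes x y E d c :: real
  assumes "\<bar>x*y\<bar> \<le> 1" "\<bar>E\<bar> \<le> d" "d > 0" "c = 1/(1+d)"
  shows "c * (x*y + E) \<in> {-1..1} \<and> \<bar>c * (x*y + E) - x*y\<bar> \<le> 2*d"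
proof -
  have c0: "c > 0" "c * (1+d) = 1" using assms by auto
  have "\<bar>x*y + E\<bar> \<le> 1 + d" using assms by linarith
  then have "c * \<bar>x*y + E\<bar> \<le> c * (1+d)" by (rule mult_left_mono) (use c0 in auto)
  then have "\<bar>c * (x*y + E)\<bar> \<le> c * (1+d)" using c0 by (simp add: abs_mult)
  then have r: "c * (x*y + E) \<in> {-1..1}" using c0 by auto
  have "c * (x*y + E) - x*y = c*E - (1-c)*(x*y)" by (simp add: algebra_simps)
  also have "\<bar>\<dots>\<bar> \<le> c*\<bar>E\<bar> + (1-c)*\<bar>x*y\<bar>"
  proof -
    have c1: "1 - c \<ge> 0" using c0 assms(3) by (simp add: assms(4))
    have "\<bar>c*E - (1-c)*(x*y)\<bar> \<le> \<bar>c*E\<bar> + \<bar>(1-c)*(x*y)\<bar>" by (rule abs_triangle_ineq4)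
    also have "\<bar>c*E\<bar> = c*\<bar>E\<bar>" using c0 by (simp add: abs_mult)
    also have "\<bar>(1-c)*(x*y)\<bar> = (1-c)*\<bar>x*y\<bar>" using c1 by (simp only: abs_mult abs_of_nonneg)
    finally show ?thesis .
  qed
  also have "\<dots> \<le> c*d + (1-c)"
  proof -
    have "1 - c \<ge> 0" using c0 assms(3) by (simp add: assms(4))
    then show ?thesis using assms(1,2) c0 by (simp add: add_mono mult_left_mono mult_left_le)
  qed
  also have "\<dots> = 2*d*c" using c0(2) by (simp add: algebra_simps)
  also have "\<dots> \<le> 2*d*1"
  proof -
    have "c \<le> 1" using c0 assms(3) by (simp add: assms(4))
    then show ?thesis using assms(3) by (intro mult_left_mono) auto
  qed
  finally show ?thesis using r by simp
qed

theorem mainTheorem9: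
  fixes k L :: nat
  assumes "k \<ge> 4" and "L \<ge> 1"
  shows "\<exists>f \<in> NN 2 1 (3 * k * 2 ^ k + 3) L.
           (\<forall>x \<in> {-1..1}. \<forall>y \<in> {-1..1}.
              f (vec2 x y) 0 \<in> {-1..1} \<and>
              \<bar>f (vec2 x y) 0 - x * y\<bar> \<le> (1/2::real) ^ (2 * k * L + 1))"
proof -
  define n :: nat where "n = 2^(k+1)"
  define d :: real where "d = (1/2)^(2*k*L+2)"
  define c :: real where "c = 1/(1+d)"
  have n0: "n > 0" by (simp add: n_def)
  have d0: "d > 0" by (simp add: d_def)
  obtain m where Lm: "L = Suc m" using assms(2) by (cases L) auto
  let ?f = "nn_eval (NW n L) (AW n L c) (bW n L) L"
  have mem: "?f \<in> NN 2 1 (3 * k * 2 ^ k + 3) L"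
    unfolding NN_def
  proof (intro CollectI exI conjI)
    show "NW n L 0 = 2" by (simp add: NW_def)
    show "NW n L (Suc L) = 1" by (simp add: NW_def)
    have w: "2*n+2 \<le> 3 * k * 2 ^ k + 3"
    proof -
      have "2*n = 4 * 2^k" by (simp add: n_def)
      also have "\<dots> \<le> 3 * k * 2^k" using assms(1) by simp
      finally show ?thesis by simp
    qed
    show "\<forall>l\<in>{1..L}. NW n L l \<le> 3 * k * 2 ^ k + 3" using w by (auto simp: NW_def)
  qed (rule refl)
  have main: "?f (vec2 x y) 0 \<in> {-1..1} \<and> \<bar>?f (vec2 x y) 0 - x * y\<bar> \<le> (1/2::real) ^ (2 * k * L + 1)"
    if x: "x \<in> {-1..1}" and y: "y \<in> {-1..1}" for x y
  proof -
    define t where "t = (x+y+2)/4"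
    define r where "r = (x-y+2)/4"
    have x1: "-1 \<le> x" "x \<le> 1" and y1: "-1 \<le> y" "y \<le> 1" using x y by auto
    have t01: "0 \<le> t" "t \<le> 1" using x1 y1 by (auto simp: t_def)
    have r01: "0 \<le> r" "r \<le> 1" using x1 y1 by (auto simp: r_def)
    have ev: "?f (vec2 x y) 0 = c * (-4) * (Acc n L t - Acc n L r)"
      unfolding t_def r_def by (rule out_eval[OF n0 x1 y1 Lm])
    have it: "0 \<le> U n L t" "U n L t \<le> 1" "Acc n L t = q t - q (U n L t) / (real n)^(2*L)"
      using iter[OF n0 t01] by auto
    have ir: "0 \<le> U n L r" "U n L r \<le> 1" "Acc n L r = q r - q (U n L r) / (real n)^(2*L)"
      using iter[OF n0 r01] by auto
    define E where "E = 4 * (q (U n L t) - q (U n L r)) / (real n)^(2*L)"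
    have qq: "-4 * (q t - q r) = x * y" by (simp add: q_def t_def r_def power2_eq_square field_simps)
    have F: "-4 * (Acc n L t - Acc n L r) = x*y + E"
      unfolding it(3) ir(3) E_def qq[symmetric] by (simp add: algebra_simps diff_divide_distrib)
    have qa: "0 \<le> q (U n L t)" "q (U n L t) \<le> 1/4" using q_bounds it(1,2) by auto
    have qb: "0 \<le> q (U n L r)" "q (U n L r) \<le> 1/4" using q_bounds ir(1,2) by auto
    have Npos: "(real n)^(2*L) > 0" using n0 by simp
    have "\<bar>4 * (q (U n L t) - q (U n L r))\<bar> \<le> 1" using qa qb by auto
    then have "\<bar>E\<bar> \<le> 1 / (real n)^(2*L)" unfolding E_def using Npos
      by (simp add: abs_div divide_right_mono)
    also have "\<dots> \<le> d"
    proof -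
      have "(real n)^(2*L) = (2^(k+1))^(2*L)" by (simp add: n_def)
      also have "\<dots> = 2^((k+1)*(2*L))" by (rule power_mult[symmetric])
      also have "(k+1)*(2*L) = 2*(k+1)*L" by simp
      finally have "(real n)^(2*L) = 2^(2*(k+1)*L)" .
      moreover have "(2::real)^(2*k*L+2) \<le> 2^(2*(k+1)*L)"
        by (rule power_increasing) (use assms(2) in \<open>auto simp: algebra_simps\<close>)
      ultimately have "1 / (real n)^(2*L) \<le> 1 / 2^(2*k*L+2)"
        by (simp add: frac_le)
      then show ?thesis by (simp add: d_def power_one_over)
    qed
    finally have Eb: "\<bar>E\<bar> \<le> d" .
    have xy: "\<bar>x*y\<bar> \<le> 1" using x1 y1 by (simp add: abs_mult mult_le_one)
    have fb: "c * (x*y + E) \<in> {-1..1} \<and> \<bar>c * (x*y + E) - x*y\<bar> \<le> 2*d"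
      by (rule final_bounds[OF xy Eb d0 c_def])
    have "?f (vec2 x y) 0 = c * (x*y + E)" unfolding ev F[symmetric] by (simp add: algebra_simps)
    moreover have "2*d = (1/2::real) ^ (2 * k * L + 1)" by (simp add: d_def)
    ultimately show ?thesis using fb by simp
  qed
  show ?thesis using mem main by blast
qed


end
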